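(* Let $B\subseteq\mathbb{R}^n$ be a bounded set and let $V_0,V_1,\dots$ be nonempty finite subsets of $B$. Suppose there are $C^\star>0$ and $r_0>0$ such that for every $k\geq1$ and every $v_k\in V_k$ there exists $v_{k-1}\in V_{k-1}$ with $|v_{k-1}-v_k|<C^\star2^{-k}r_0$. Then $V_k$ converges in the Hausdorff metric to a compact set $V\subseteq\overline{B}$. *)

theory Defs
  imports "HOL-Analysis.Analysis"
begin

definition hausdorff_dist :: "'a::metric_space set \<Rightarrow> 'a set \<Rightarrow> real" where
  "hausdorff_dist A B = max (SUP a\<in>A. infdist a B) (SUP b\<in>B. infdist b A)"

end

theory Submission
  imports Defs
begin

lemma closed_infdist_le: "closed {x. infdist x A \<le> e}"
  by (intro closed_Collect_le continuous_on_infdist continuous_on_id continuous_on_const)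

lemma closed_infdist_ge: "closed {x. e \<le> infdist x A}"
  by (intro closed_Collect_le continuous_on_infdist continuous_on_id continuous_on_const)

theorem lemma8p2:
  fixes B :: "'a::euclidean_space set"
    and V :: "nat \<Rightarrow> 'a set"
    and Cstar r0 :: real
  assumes "bounded B"
    and "\<And>k. finite (V k)"
    and "\<And>k. V k \<noteq> {}"
    and "\<And>k. V k \<subseteq> B"
    and "Cstar > 0" and "r0 > 0"
    and "\<And>k v. k \<ge> 1 \<Longrightarrow> v \<in> V k \<Longrightarrow>
           \<exists>w \<in> V (k - 1). norm (w - v) < Cstar * (1/2) ^ k * r0"
  shows "\<exists>W. compact W \<and> W \<noteq> {} \<and> W \<subseteq> closure B \<and>
             (\<lambda>k. hausdorff_dist (V k) W) \<longlonglongrightarrow> 0"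
proof -
  note a = assms
  define E where "E j = Cstar * r0 * (1/2::real) ^ j" for j
  have chain: "\<forall>v\<in>V k. \<exists>w\<in>V j. dist v w \<le> Cstar * r0 * ((1/2) ^ j - (1/2) ^ k)"
    if "j \<le> k" for j k
    using that
  proof (induction k rule: dec_induct)
    case base
    then show ?case by auto
  next
    case (step k)
    show ?case
    proof
      fix v assume v: "v \<in> V (Suc k)"
      from a(7)[of "Suc k" v] v obtain u where u: "u \<in> V k"
        and du: "norm (u - v) < Cstar * (1/2) ^ Suc k * r0" by auto
      from step.IH u obtain w where w: "w \<in> V j"
        and dw: "dist u w \<le> Cstar * r0 * ((1/2) ^ j - (1/2) ^ k)" by auto
      have "dist v w \<le> dist v u + dist u w" by (rule dist_triangle)
      also have "\<dots> \<le> Cstar * (1/2) ^ Suc k * r0 + Cstar * r0 * ((1/2) ^ j - (1/2) ^ k)"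
        using du dw by (simp add: dist_norm norm_minus_commute)
      also have "\<dots> = Cstar * r0 * ((1/2) ^ j - (1/2) ^ Suc k)"
        by (simp add: algebra_simps)
      finally show "\<exists>w\<in>V j. dist v w \<le> Cstar * r0 * ((1/2) ^ j - (1/2) ^ Suc k)"
        using w by blast
    qed
  qed
  have bk: "infdist v (V j) \<le> E j" if "j \<le> k" "v \<in> V k" for j k v
  proof -
    from chain[OF that(1)] that(2) obtain w where w: "w \<in> V j"
      and d: "dist v w \<le> Cstar * r0 * ((1/2) ^ j - (1/2) ^ k)" by auto
    have "Cstar * r0 * ((1/2) ^ j - (1/2) ^ k) \<le> E j"
      using a(5,6) by (simp add: E_def)
    with d infdist_le[OF w, of v] show ?thesis by linarith
  qed
  define U where "U j = closure (\<Union>k\<in>{j..}. V k)" for j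
  have Usub: "U j \<subseteq> closure B" for j
    unfolding U_def using a(4) by (intro closure_mono) auto
  have Ucomp: "compact (U j)" for j
    unfolding U_def using Usub[of j] a(1)
    by (metis U_def bounded_closure bounded_subset closed_closure compact_eq_bounded_closed)
  have Une: "U j \<noteq> {}" for j
    unfolding U_def using a(3)[of j] by auto
  have Umono: "U n \<subseteq> U m" if "m \<le> n" for m n
    unfolding U_def using that by (intro closure_mono) (auto intro: order_trans)
  define W where "W = \<Inter>(range U)"
  have Wcomp: "compact W"
    unfolding W_def using Ucomp by (intro compact_Inter) auto
  have Wne: "W \<noteq> {}"
    unfolding W_def using compact_nest[OF Ucomp Une Umono] .
  have Wsub: "W \<subseteq> closure B"
    unfolding W_def using Usub by blast
  have p2: "infdist w (V k) \<le> E k" if "w \<in> W" for w k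
  proof -
    have "(\<Union>k'\<in>{k..}. V k') \<subseteq> {x. infdist x (V k) \<le> E k}"
      using bk by auto
    hence "U k \<subseteq> {x. infdist x (V k) \<le> E k}"
      unfolding U_def by (intro closure_minimal closed_infdist_le)
    moreover have "w \<in> U k" using that unfolding W_def by auto
    ultimately show ?thesis by auto
  qed
  have p1: "\<exists>j. \<forall>k\<ge>j. \<forall>v\<in>V k. infdist v W < d" if "d > 0" for d
  proof (rule ccontr)
    assume H: "\<not> ?thesis"
    define K where "K j = U j \<inter> {x. d \<le> infdist x W}" for j
    have Kc: "compact (K j)" for j
      unfolding K_def using Ucomp closed_infdist_ge by (intro compact_Int_closed) auto
    have Kne: "K j \<noteq> {}" for j
    proof -
      from H have "\<exists>k\<ge>j. \<exists>v\<in>V k. \<not> infdist v W < d" by simp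
      then obtain k v where "k \<ge> j" "v \<in> V k" "\<not> infdist v W < d" by blast
      moreover have "v \<in> U j" unfolding U_def using \<open>k \<ge> j\<close> \<open>v \<in> V k\<close>
        by (intro closure_subset[THEN subsetD]) auto
      ultimately show ?thesis unfolding K_def by auto
    qed
    have Km: "K n \<subseteq> K m" if "m \<le> n" for m n
      unfolding K_def using Umono[OF that] by auto
    have "\<Inter>(range K) \<noteq> {}" by (rule compact_nest[OF Kc Kne Km])
    then obtain x where x: "x \<in> \<Inter>(range K)" by (meson ex_in_conv)
    hence xK: "\<And>j. x \<in> K j" by simp
    have "x \<in> W" unfolding W_def using xK unfolding K_def by simp
    moreover have "d \<le> infdist x W" using xK[of 0] unfolding K_def by simp
    ultimately
    show False using that by simp
  qed
  have hd0: "0 \<le> hausdorff_dist (V k) W" for k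
  proof -
    obtain v where v: "v \<in> V k" using a(3) by auto
    have "infdist v W \<le> (SUP a\<in>V k. infdist a W)"
      using v a(2) by (intro cSUP_upper) auto
    thus ?thesis unfolding hausdorff_dist_def using infdist_nonneg[of v W] by linarith
  qed
  have hdle: "hausdorff_dist (V k) W \<le> max d (E k)"
    if "\<forall>v\<in>V k. infdist v W < d" for k d
  proof -
    have "(SUP a\<in>V k. infdist a W) \<le> d"
      using that a(3) by (intro cSUP_least) (auto intro: less_imp_le)
    moreover have "(SUP b\<in>W. infdist b (V k)) \<le> E k"
      using Wne p2 by (intro cSUP_least) auto
    ultimately show ?thesis unfolding hausdorff_dist_def by linarith
  qed
  have Elim: "E \<longlonglongrightarrow> 0"
    unfolding E_def by (intro tendsto_mult_right_zero LIMSEQ_power_zero) auto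
  have "(\<lambda>k. hausdorff_dist (V k) W) \<longlonglongrightarrow> 0"
  proof (rule LIMSEQ_I)
    fix r :: real assume r: "0 < r"
    from p1[of "r/2"] r obtain j where j: "\<forall>k\<ge>j. \<forall>v\<in>V k. infdist v W < r/2" by auto
    from LIMSEQ_D[OF Elim r] obtain n where n: "\<forall>k\<ge>n. norm (E k - 0) < r" by auto
    show "\<exists>no. \<forall>k\<ge>no. norm (hausdorff_dist (V k) W - 0) < r"
    proof (intro exI allI impI)
      fix k assume "max j n \<le> k"
      hence "hausdorff_dist (V k) W \<le> max (r/2) (E k)" using j by (intro hdle) auto
      moreover have "E k < r" using n \<open>max j n \<le> k\<close> E_def a(5,6) by auto
      ultimately show "norm (hausdorff_dist (V k) W - 0) < r" using hd0[of k] r by auto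
    qed
  qed
  thus ?thesis using Wcomp Wne Wsub by blast
qed

end
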